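(* Let $X$ be a Hausdorff topological space, $\Phi$ a local semiflow on $X$, and $\mathscr A$ an attractor of $\Phi$. Then $\mathscr A$ is stable: for any neighborhood $U$ of $\mathscr A$ there is a neighborhood $V$ of $\mathscr A$ with $\Phi(\mathbb R^+)V\subset U$.
   Context: A local semiflow $\Phi$ on $X$ is a continuous map from an open subset $\mathcal D_\Phi\subset\mathbb R^+\times X$ to $X$ such that: (i) for each $x$ there is $T_x\in(0,\infty]$ with $(t,x)\in\mathcal D_\Phi$ iff $t\in[0,T_x)$; (ii) $\Phi(0,x)=x$; (iii) if $(t+s,x)\in\mathcal D_\Phi$ with $t,s\ge0$ then $\Phi(t+s,x)=\Phi(t,\Phi(s,x))$. Write $\Phi(t)x=\Phi(t,x)$, $\Phi(J)M=\{\Phi(t)x:x\in M,\ t\in J\cap[0,T_x)\}$, $\Phi(t)M=\Phi(\{t\})M$. Convention: $U$ is a neighborhood of $A$ if $\overline A\subset\mathrm{int}\,U$. A set $K$ is invariant if $\Phi(t)K\subset K$ and $K\subset\Phi(t)K$ for all $t\ge0$. $K$ attracts $B$ if $T_x=\infty$ for all $x\in B$ and for every neighborhood $V$ of $K$ there is $t_0>0$ with $\Phi(t)B\subset V$ for all $t>t_0$. A set is s-compact if every sequence in it has a subsequence converging to a point of the set. An attractor is a nonempty s-compact invariant set $\mathscr A$ for which there is a neighborhood $N$ of $\mathscr A$ such that $\mathscr A$ attracts $N$ and every s-compact invariant subset of $N$ is contained in $\mathscr A$. *)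

theory Defs
  imports "HOL-Analysis.Analysis"
begin

text \<open>A local semiflow is given by its escape-time function T (with T x in (0,\<infinity>])
  and the map Phi; its domain is D = {(t,x). 0 \<le> t < T x}. Values of Phi outside
  the domain are irrelevant.\<close>

definition sf_dom :: "('a \<Rightarrow> ereal) \<Rightarrow> (real \<times> 'a) set" where
  "sf_dom T = {(t, x). 0 \<le> t \<and> ereal t < T x}"

definition local_semiflow ::
  "('a::topological_space \<Rightarrow> ereal) \<Rightarrow> (real \<Rightarrow> 'a \<Rightarrow> 'a) \<Rightarrow> bool" where
  "local_semiflow T Phi \<longleftrightarrow>
     (\<forall>x. 0 < T x) \<and>
     openin (top_of_set ({0..} \<times> UNIV)) (sf_dom T) \<and>
     continuous_on (sf_dom T) (\<lambda>(t, x). Phi t x) \<and>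
     (\<forall>x. Phi 0 x = x) \<and>
     (\<forall>x t s. 0 \<le> t \<and> 0 \<le> s \<and> (t + s, x) \<in> sf_dom T \<longrightarrow>
        (t, Phi s x) \<in> sf_dom T \<and> Phi (t + s) x = Phi t (Phi s x))"

definition sf_image ::
  "('a \<Rightarrow> ereal) \<Rightarrow> (real \<Rightarrow> 'a \<Rightarrow> 'a) \<Rightarrow> real set \<Rightarrow> 'a set \<Rightarrow> 'a set" where
  "sf_image T Phi J M = {Phi t x | t x. x \<in> M \<and> t \<in> J \<and> 0 \<le> t \<and> ereal t < T x}"

definition nbhd :: "'a::topological_space set \<Rightarrow> 'a set \<Rightarrow> bool" where
  "nbhd A U \<longleftrightarrow> closure A \<subseteq> interior U"

definition sf_invariant ::
  "('a \<Rightarrow> ereal) \<Rightarrow> (real \<Rightarrow> 'a \<Rightarrow> 'a) \<Rightarrow> 'a set \<Rightarrow> bool" where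
  "sf_invariant T Phi K \<longleftrightarrow>
     (\<forall>t\<ge>0. sf_image T Phi {t} K \<subseteq> K \<and> K \<subseteq> sf_image T Phi {t} K)"

definition sf_attracts ::
  "('a::topological_space \<Rightarrow> ereal) \<Rightarrow> (real \<Rightarrow> 'a \<Rightarrow> 'a) \<Rightarrow> 'a set \<Rightarrow> 'a set \<Rightarrow> bool" where
  "sf_attracts T Phi K B \<longleftrightarrow>
     (\<forall>x\<in>B. T x = \<infinity>) \<and>
     (\<forall>V. nbhd K V \<longrightarrow> (\<exists>t0>0. \<forall>t>t0. sf_image T Phi {t} B \<subseteq> V))"

text \<open>s-compactness is the library notion seq_compact.\<close>
definition sf_attractor ::
  "('a::topological_space \<Rightarrow> ereal) \<Rightarrow> (real \<Rightarrow> 'a \<Rightarrow> 'a) \<Rightarrow> 'a set \<Rightarrow> bool" where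
  "sf_attractor T Phi A \<longleftrightarrow>
     A \<noteq> {} \<and> seq_compact A \<and> sf_invariant T Phi A \<and>
     (\<exists>N. nbhd A N \<and> sf_attracts T Phi A N \<and>
        (\<forall>K. K \<subseteq> N \<and> seq_compact K \<and> sf_invariant T Phi K \<longrightarrow> K \<subseteq> A))"

end

theory Submission
  imports Defs
begin

lemma tube_swap:
  fixes W :: "(real \<times> 'a::topological_space) set"
  assumes "compact K" "open W" "K \<times> {x0} \<subseteq> W"
  shows "\<exists>X0. x0 \<in> X0 \<and> open X0 \<and> K \<times> X0 \<subseteq> W"
proof -
  let ?W = "prod.swap -` W"
  have "open ?W"
    by (rule open_vimage[OF assms(2) continuous_on_swap])
  moreover have "{x0} \<times> K \<subseteq> ?W"
  proof
    fix p assume "p \<in> {x0} \<times> K"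
    then obtain a where p: "p = (x0, a)" "a \<in> K" by blast
    then have "(a, x0) \<in> W" using assms(3) by blast
    then show "p \<in> ?W" using p by simp
  qed
  ultimately have "\<exists>X0. x0 \<in> X0 \<and> open X0 \<and> X0 \<times> K \<subseteq> ?W"
    by (rule Elementary_Topology.tube_lemma[OF assms(1)])
  then obtain X0 where X0: "x0 \<in> X0" "open X0" "X0 \<times> K \<subseteq> ?W" by blast
  have "K \<times> X0 \<subseteq> W"
  proof
    fix p assume "p \<in> K \<times> X0"
    then obtain a b where p: "p = (a, b)" "a \<in> K" "b \<in> X0" by blast
    then have "(b, a) \<in> ?W" using X0(3) by blast
    then show "p \<in> W" using p by simp
  qed
  then show ?thesis using X0 by blast
qed

theorem theorem4p5:
  fixes T :: "'a::t2_space \<Rightarrow> ereal" and Phi :: "real \<Rightarrow> 'a \<Rightarrow> 'a" and A :: "'a set"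
  assumes "local_semiflow T Phi"
    and "sf_attractor T Phi A"
  shows "\<forall>U. nbhd A U \<longrightarrow> (\<exists>V. nbhd A V \<and> sf_image T Phi {0..} V \<subseteq> U)"
proof (intro allI impI)
  fix U assume hU: "nbhd A U"
  have opendom: "openin (top_of_set ({0..} \<times> UNIV)) (sf_dom T)"
    using assms(1) unfolding local_semiflow_def by (elim conjE)
  have cont: "continuous_on (sf_dom T) (\<lambda>(t, x). Phi t x)"
    using assms(1) unfolding local_semiflow_def by (elim conjE)
  have attr: "A \<noteq> {} \<and> seq_compact A \<and> sf_invariant T Phi A \<and>
     (\<exists>N. nbhd A N \<and> sf_attracts T Phi A N \<and>
        (\<forall>K. K \<subseteq> N \<and> seq_compact K \<and> sf_invariant T Phi K \<longrightarrow> K \<subseteq> A))"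
    using assms(2) unfolding sf_attractor_def .
  have inv: "sf_invariant T Phi A" using attr by (elim conjE)
  have "\<exists>N. nbhd A N \<and> sf_attracts T Phi A N" using attr by (elim conjE exE) (intro exI conjI)
  then obtain N where hN: "nbhd A N" and att: "sf_attracts T Phi A N" by (elim exE conjE)
  have att2: "(\<forall>x\<in>N. T x = \<infinity>) \<and>
     (\<forall>V. nbhd A V \<longrightarrow> (\<exists>t0>0. \<forall>t>t0. sf_image T Phi {t} N \<subseteq> V))"
    using att unfolding sf_attracts_def .
  define W where "W = interior U \<inter> interior N"
  have oW: "open W" unfolding W_def by (intro open_Int open_interior)
  have clW: "closure A \<subseteq> W" unfolding W_def using hU hN unfolding nbhd_def by (rule Int_greatest)
  have "nbhd A W" using clW oW unfolding nbhd_def by (simp add: interior_open)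
  then have "\<exists>t0>0. \<forall>t>t0. sf_image T Phi {t} N \<subseteq> W" using att2 by (elim conjE allE impE)
  then obtain t0 where t0: "t0 > 0" "\<And>t. t > t0 \<Longrightarrow> sf_image T Phi {t} N \<subseteq> W"
    by (elim exE conjE) simp
  have TN0: "\<forall>x\<in>N. T x = \<infinity>" using att2 by (elim conjE)
  have TN: "\<And>x. x \<in> N \<Longrightarrow> T x = \<infinity>" using TN0 by blast
  have clN: "closure A \<subseteq> N" using hN interior_subset unfolding nbhd_def by (rule subset_trans)
  have TA: "\<And>x. x \<in> closure A \<Longrightarrow> T x = \<infinity>" using TN clN by blast
  have inv2: "\<And>t x. t \<ge> 0 \<Longrightarrow> x \<in> closure A \<Longrightarrow> Phi t x \<in> closure A"
  proof -
    fix t x assume t: "t \<ge> (0::real)" and x: "x \<in> closure A"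
    have "continuous_on (closure A) (\<lambda>x. (\<lambda>(t, x). Phi t x) (t, x))"
    proof (rule continuous_on_compose2[OF cont])
      show "continuous_on (closure A) (\<lambda>x. (t, x))" by (intro continuous_intros)
      show "(\<lambda>x. (t, x)) ` closure A \<subseteq> sf_dom T" using t TA by (auto simp: sf_dom_def)
    qed
    then have c: "continuous_on (closure A) (Phi t)" by simp
    have "Phi t ` A \<subseteq> closure A"
    proof
      fix z assume "z \<in> Phi t ` A"
      then obtain y where y: "y \<in> A" "z = Phi t y" by blast
      have "T y = \<infinity>" using TA y closure_subset by blast
      then have "z \<in> sf_image T Phi {t} A" using y t unfolding sf_image_def by auto
      then show "z \<in> closure A" using inv t closure_subset unfolding sf_invariant_def by blast
    qed
    from image_closure_subset[OF c closed_closure this] x show "Phi t x \<in> closure A" by blast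
  qed
  define s where "s = t0 + 1"
  have tube: "\<exists>Ob. x \<in> Ob \<and> open Ob \<and> (\<forall>y\<in>Ob. \<forall>\<tau>\<in>{0..s}. Phi \<tau> y \<in> W)"
    if x: "x \<in> closure A" for x
  proof -
    define G where "G = sf_dom T \<inter> (\<lambda>(t, x). Phi t x) -` W"
    have "openin (top_of_set (sf_dom T)) G"
      unfolding G_def
      by (rule continuous_openin_preimage[OF cont, of UNIV]) (auto simp: oW)
    then have "openin (top_of_set ({0..} \<times> UNIV)) G" using opendom openin_trans by blast
    then obtain H where H: "open H" "G = ({0..} \<times> UNIV) \<inter> H" by (meson openin_open)
    have "{0..s} \<times> {x} \<subseteq> G"
    proof
      fix p assume "p \<in> {0..s} \<times> {x}"
      then obtain \<tau> where p: "p = (\<tau>, x)" "0 \<le> \<tau>" by auto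
      have "(\<tau>, x) \<in> sf_dom T" using p TA[OF x] by (simp add: sf_dom_def)
      moreover have "Phi \<tau> x \<in> W" using inv2[OF p(2) x] clW by blast
      ultimately show "p \<in> G" using p unfolding G_def by simp
    qed
    then have "{0..s} \<times> {x} \<subseteq> H" unfolding H(2) by (simp only: Int_subset_iff)
    then have "\<exists>Ob. x \<in> Ob \<and> open Ob \<and> {0..s} \<times> Ob \<subseteq> H"
      by (rule tube_swap[OF compact_Icc H(1)])
    then obtain Ob where Ob: "x \<in> Ob" "open Ob" "{0..s} \<times> Ob \<subseteq> H"
      by blast
    have "\<forall>y\<in>Ob. \<forall>\<tau>\<in>{0..s}. Phi \<tau> y \<in> W"
    proof (intro ballI)
      fix y \<tau> assume "y \<in> Ob" "\<tau> \<in> {0..s}"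
      then have "(\<tau>, y) \<in> {0..s} \<times> Ob" by simp
      then have "(\<tau>, y) \<in> H" by (rule subsetD[OF Ob(3)])
      moreover have "(\<tau>, y) \<in> {0..} \<times> UNIV" using \<open>\<tau> \<in> {0..s}\<close> by simp
      ultimately have "(\<tau>, y) \<in> G" unfolding H(2) by (rule IntI[rotated])
      then show "Phi \<tau> y \<in> W" unfolding G_def by auto
    qed
    with Ob show ?thesis by blast
  qed
  define V where "V = \<Union>{Ob. open Ob \<and> (\<forall>y\<in>Ob. \<forall>\<tau>\<in>{0..s}. Phi \<tau> y \<in> W)} \<inter> interior N"
  have oV: "open V" unfolding V_def by (intro open_Int open_Union) auto
  have "closure A \<subseteq> V"
  proof
    fix x assume x: "x \<in> closure A"
    obtain Ob where Ob: "x \<in> Ob" "open Ob" "\<forall>y\<in>Ob. \<forall>\<tau>\<in>{0..s}. Phi \<tau> y \<in> W"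
      using tube[OF x] by blast
    have "x \<in> interior N" using x hN unfolding nbhd_def by blast
    then show "x \<in> V" unfolding V_def using Ob by blast
  qed
  then have "nbhd A V" using oV unfolding nbhd_def by (simp add: interior_open)
  moreover have "sf_image T Phi {0..} V \<subseteq> U"
  proof
    fix z assume "z \<in> sf_image T Phi {0..} V"
    then obtain \<tau> y where z: "z = Phi \<tau> y" "y \<in> V" "\<tau> \<ge> 0" "ereal \<tau> < T y"
      unfolding sf_image_def by auto
    have WU: "W \<subseteq> U" unfolding W_def using interior_subset by blast
    show "z \<in> U"
    proof (cases "\<tau> \<le> s")
      case True
      from z(2) obtain Ob where "y \<in> Ob" "\<forall>y\<in>Ob. \<forall>\<tau>\<in>{0..s}. Phi \<tau> y \<in> W" unfolding V_def by blast
      then have "Phi \<tau> y \<in> W" using True z(3) by auto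
      then show ?thesis using z WU by auto
    next
      case False
      have yN: "y \<in> N" using z(2) interior_subset unfolding V_def by blast
      then have "z \<in> sf_image T Phi {\<tau>} N" using z TN unfolding sf_image_def by auto
      moreover have "\<tau> > t0" using False s_def by auto
      moreover have "sf_image T Phi {\<tau>} N \<subseteq> W" using t0(2) calculation(2) .
      ultimately show ?thesis using WU by blast
    qed
  qed
  ultimately show "\<exists>V. nbhd A V \<and> sf_image T Phi {0..} V \<subseteq> U" by (intro exI[of _ V] conjI)
qed

end
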